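(* Let $A$ be a finite alphabet, $x\in A^{\mathcal{T}}$ a configuration, and let $y\in (A\times A)^{\mathcal{T}}$ be a dyadic encoding of $x$. Let $n\ge 0$, let $p:\mathbb{U}_n\to A$ be a pattern, and let $\widetilde{p}$ be the set of all maps $\mathbb{L}_n\to A$ of the form $h\mapsto \pi_2(y')_h$, where $y'$ ranges over dyadic encodings of configurations $x'$ with $x'_h=p_h$ for all $h\in\mathbb{U}_n$. Then for every tile $g$: the pattern $p$ appears in $x$ at position $g$ (i.e. $x_{g\cdot h}=p_h$ for all $h\in\mathbb{U}_n$) if and only if the map $h\mapsto \pi_2(y)_{g\cdot h}$, $h\in\mathbb{L}_n$, belongs to $\widetilde{p}$.
   Context: A $2$-fold horocyclic tessellation $\mathcal{T}$ of $\mathbb{H}^2$ (upper half-plane model) is a tiling arranged in horizontal rows; each row is a bi-infinite sequence of tiles, each tile sits above exactly two tiles of the row immediately below (its bottom-left and bottom-right children), and the row below consists exactly of the children of the tiles of the row above, in the induced order. One such tessellation is fixed. Tiles are named by words over $\{\alpha,\alpha^{-1},\beta,\beta^{-1}\}$: a fixed tile is $\varepsilon$; if a tile is $g$, then $g\cdot\beta$ is its right neighbour in its row, $g\cdot\alpha$ its bottom-left child and $g\cdot\alpha\cdot\beta$ its bottom-right child, with $\alpha\alpha^{-1}=\beta\beta^{-1}=\varepsilon$ and $\alpha\beta^2=\beta\alpha$. Configurations are maps $\mathcal{T}\to A$. Supports: $\mathbb{U}_n=\{\alpha^k\beta^q: 0\le k\le n-1,\ 0\le q\le 2^k-1\}$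 and $\mathbb{L}_n=\{\alpha^{n+1}\beta^q: 0\le q\le 2^{n+1}-1\}$; a pattern of size $n$ is a map $\mathbb{U}_n\to A$. For $z\in(A\times A)^{\mathcal{T}}$, $\pi_1(z),\pi_2(z)\in A^{\mathcal{T}}$ denote its first and second coordinates. A dyadic encoding of $x\in A^{\mathcal{T}}$ is a configuration $y\in(A\times A)^{\mathcal{T}}$ such that $\pi_1(y)=x$ and, for every tile $g$, $\pi_2(y)_{g\alpha}=x_g$ and $\pi_2(y)_{g\alpha\beta}=\pi_2(y)_g$ (it is unique unless the tessellation has a vertical fracture line, in which case one undetermined symbol propagates along it). *)

theory Defs
  imports Main "HOL-Library.FuncSet"
begin

text \<open>A 2-fold horocyclic tessellation, described by its tiles (type 't) together with
  the map alpha (bottom-left child) and beta (right neighbour in the row).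
  The bottom-right child of g is beta (alpha g).  Rows are the beta-orbits; they are
  bi-infinite and indexed by an integer level increasing downwards.\<close>

definition horocyclic2 :: "('t \<Rightarrow> 't) \<Rightarrow> ('t \<Rightarrow> 't) \<Rightarrow> bool" where
  "horocyclic2 alpha beta \<longleftrightarrow>
     bij beta
   \<and> (\<forall>g. alpha (beta g) = beta (beta (alpha g)))
   \<and> (\<forall>g n. n > 0 \<longrightarrow> (beta ^^ n) g \<noteq> g)
   \<and> (\<forall>t. \<exists>!g. t = alpha g \<or> t = beta (alpha g))
   \<and> (\<exists>lvl :: 't \<Rightarrow> int.
        (\<forall>g. lvl (beta g) = lvl g \<and> lvl (alpha g) = lvl g + 1)
      \<and> (\<forall>g h. lvl g = lvl h \<longleftrightarrow> (\<exists>n. (beta ^^ n) g = h \<or> (beta ^^ n) h = g)))"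

text \<open>The tile g . alpha^k . beta^q ; the word alpha^k beta^q is encoded by the pair (k,q).\<close>
definition act :: "('t \<Rightarrow> 't) \<Rightarrow> ('t \<Rightarrow> 't) \<Rightarrow> 't \<Rightarrow> nat \<times> nat \<Rightarrow> 't" where
  "act alpha beta g h = (beta ^^ snd h) ((alpha ^^ fst h) g)"

definition Uset :: "nat \<Rightarrow> (nat \<times> nat) set" where
  "Uset n = {(k, q). k < n \<and> q < 2 ^ k}"

definition Lset :: "nat \<Rightarrow> (nat \<times> nat) set" where
  "Lset n = {(k, q). k = n + 1 \<and> q < 2 ^ (n + 1)}"

definition dyadic_encoding ::
  "('t \<Rightarrow> 't) \<Rightarrow> ('t \<Rightarrow> 't) \<Rightarrow> ('t \<Rightarrow> 'a) \<Rightarrow> ('t \<Rightarrow> 'a \<times> 'a) \<Rightarrow> bool" where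
  "dyadic_encoding alpha beta x y \<longleftrightarrow>
     (\<forall>g. fst (y g) = x g)
   \<and> (\<forall>g. snd (y (alpha g)) = x g \<and> snd (y (beta (alpha g))) = snd (y g))"

definition ptilde ::
  "('t \<Rightarrow> 't) \<Rightarrow> ('t \<Rightarrow> 't) \<Rightarrow> 't \<Rightarrow> nat \<Rightarrow> (nat \<times> nat \<Rightarrow> 'a) \<Rightarrow> (nat \<times> nat \<Rightarrow> 'a) set" where
  "ptilde alpha beta eps n p =
     {restrict (\<lambda>h. snd (y' (act alpha beta eps h))) (Lset n) | x' y'.
        dyadic_encoding alpha beta x' y' \<and> (\<forall>h\<in>Uset n. x' (act alpha beta eps h) = p h)}"

end

theory Submission
  imports Defs
begin

lemma ab_pow:
  assumes "\<forall>g. alpha (beta g) = beta (beta (alpha g))"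
  shows "alpha ((beta^^q) a) = (beta^^(2*q)) (alpha a)"
  by (induction q) (simp_all add: assms)

lemma act_even:
  assumes "\<forall>g. alpha (beta g) = beta (beta (alpha g))"
  shows "act alpha beta g (Suc m, 2*q) = alpha (act alpha beta g (m,q))"
  unfolding act_def using ab_pow[OF assms] by simp

lemma act_odd:
  assumes "\<forall>g. alpha (beta g) = beta (beta (alpha g))"
  shows "act alpha beta g (Suc m, 2*q+1) = beta (alpha (act alpha beta g (m,q)))"
  unfolding act_def using ab_pow[OF assms] by simp

lemma down:
  assumes c: "\<forall>g. alpha (beta g) = beta (beta (alpha g))"
    and e: "dyadic_encoding alpha beta x y"
  shows "snd (y (act alpha beta g (Suc (k+j), (2*r+1)*2^j - 1))) = x (act alpha beta g (k,r))"
proof (induction j)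
  case 0
  have "act alpha beta g (Suc k, 2*r) = alpha (act alpha beta g (k,r))" by (rule act_even[OF c])
  then show ?case using e unfolding dyadic_encoding_def by simp
next
  case (Suc j)
  have pos: "(2*r+1)*2^j \<ge> (1::nat)" by (metis add_gr_0 less_one not_le mult_eq_0_iff power_not_zero zero_neq_numeral linorder_not_less One_nat_def Suc_leI less_numeral_extra(1) mult_pos_pos zero_less_power)
  have eq: "(2*r+1)*2^(Suc j) - 1 = 2*((2*r+1)*2^j - 1) + 1" using pos by simp
  have "act alpha beta g (Suc (k + Suc j), (2*r+1)*2^(Suc j) - 1)
      = beta (alpha (act alpha beta g (Suc (k+j), (2*r+1)*2^j - 1)))"
    unfolding eq using act_odd[OF c] by simp
  then show ?case using e Suc unfolding dyadic_encoding_def by simp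
qed

lemma agree:
  assumes c: "\<forall>g. alpha (beta g) = beta (beta (alpha g))"
    and e: "dyadic_encoding alpha beta x y" and e': "dyadic_encoding alpha beta x' y'"
    and m: "\<forall>h\<in>Uset m. x (act alpha beta g h) = x' (act alpha beta g' h)"
    and s: "snd (y g) = snd (y' g')"
  shows "\<forall>q < 2^m. snd (y (act alpha beta g (m,q))) = snd (y' (act alpha beta g' (m,q)))"
  using m
proof (induction m)
  case 0
  then show ?case using s by (simp add: act_def)
next
  case (Suc m)
  have IH: "\<forall>q < 2^m. snd (y (act alpha beta g (m,q))) = snd (y' (act alpha beta g' (m,q)))"
    using Suc by (auto simp: Uset_def)
  show ?case
  proof (intro allI impI)
    fix q :: nat assume q: "q < 2^Suc m"
    obtain q' b where qq: "q = 2*q' + b" and b: "b = 0 \<or> b = 1"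
      by (metis mod2_eq_if div_mult_mod_eq add.commute mult.commute)
    have q': "q' < 2^m" using q qq by auto
    show "snd (y (act alpha beta g (Suc m,q))) = snd (y' (act alpha beta g' (Suc m,q)))"
      using b
    proof
      assume "b = 0"
      then have "q = 2*q'" using qq by simp
      moreover have "(m,q') \<in> Uset (Suc m)" using q' by (simp add: Uset_def)
      ultimately show ?thesis using act_even[OF c, of g m q'] act_even[OF c, of g' m q'] e e' Suc.prems
        unfolding dyadic_encoding_def by simp
    next
      assume "b = 1"
      then have "q = 2*q'+1" using qq by simp
      then show ?thesis using act_odd[OF c, of g m q'] act_odd[OF c, of g' m q'] e e' IH q'
        unfolding dyadic_encoding_def by simp
    qed
  qed
qed

lemma lvl_pow_beta:
  assumes "\<forall>g. lvl (beta g) = lvl g \<and> lvl (alpha g) = lvl g + (1::int)"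
  shows "lvl ((beta^^q) a) = lvl a"
  by (induction q) (simp_all add: assms)

lemma lvl_pow_alpha:
  assumes "\<forall>g. lvl (beta g) = lvl g \<and> lvl (alpha g) = lvl g + (1::int)"
  shows "lvl ((alpha^^k) a) = lvl a + int k"
  by (induction k) (simp_all add: assms)

lemma lvl_act:
  assumes "\<forall>g. lvl (beta g) = lvl g \<and> lvl (alpha g) = lvl g + (1::int)"
  shows "lvl (act alpha beta a (k,q)) = lvl a + int k"
  unfolding act_def using lvl_pow_beta[OF assms] lvl_pow_alpha[OF assms] by simp

lemma act_inj:
  assumes l: "\<forall>g. lvl (beta g) = lvl g \<and> lvl (alpha g) = lvl g + (1::int)"
    and np: "\<forall>g n. n > 0 \<longrightarrow> (beta ^^ n) g \<noteq> g"
  shows "inj (act alpha beta a)"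
proof (rule injI)
  fix h h' assume eq: "act alpha beta a h = act alpha beta a h'"
  obtain k q k' q' where hh: "h = (k,q)" "h' = (k',q')" by fastforce
  have "k = k'" using eq lvl_act[OF l, of a] hh by (metis of_nat_eq_iff add_left_cancel)
  have key: "\<And>q q' :: nat. q < q' \<Longrightarrow> (beta^^q) ((alpha^^k) a) \<noteq> (beta^^q') ((alpha^^k) a)"
  proof
    fix q q' :: nat assume lt: "q < q'" and e2: "(beta^^q) ((alpha^^k) a) = (beta^^q') ((alpha^^k) a)"
    have "(beta^^q') ((alpha^^k) a) = (beta^^(q'-q)) ((beta^^q) ((alpha^^k) a))"
      using lt by (metis funpow_add le_add_diff_inverse2 less_imp_le comp_apply)
    then show False using np lt e2 by (metis zero_less_diff)
  qed
  have "(beta^^q) ((alpha^^k) a) = (beta^^q') ((alpha^^k) a)"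
    using eq hh \<open>k = k'\<close> by (simp add: act_def)
  then have "q = q'" using key by (metis linorder_neq_iff)
  then show "h = h'" using hh \<open>k = k'\<close> by simp
qed

theorem proposition1:
  fixes alpha beta :: "'t \<Rightarrow> 't" and eps :: 't
    and x :: "'t \<Rightarrow> 'a::finite" and y :: "'t \<Rightarrow> 'a \<times> 'a"
    and n :: nat and p :: "nat \<times> nat \<Rightarrow> 'a"
  assumes "horocyclic2 alpha beta"
    and "dyadic_encoding alpha beta x y"
  shows "\<forall>g. (\<forall>h\<in>Uset n. x (act alpha beta g h) = p h) \<longleftrightarrow>
             restrict (\<lambda>h. snd (y (act alpha beta g h))) (Lset n) \<in> ptilde alpha beta eps n p"
proof -
  have c: "\<forall>g. alpha (beta g) = beta (beta (alpha g))"
   and np: "\<forall>g n. n > 0 \<longrightarrow> (beta ^^ n) g \<noteq> g"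
   and up: "\<forall>t. \<exists>!g. t = alpha g \<or> t = beta (alpha g)"
    using assms(1) unfolding horocyclic2_def by auto
  obtain lvl :: "'t \<Rightarrow> int" where l: "\<forall>g. lvl (beta g) = lvl g \<and> lvl (alpha g) = lvl g + 1"
    using assms(1) unfolding horocyclic2_def by auto
  define par where "par t = (THE g. t = alpha g \<or> t = beta (alpha g))" for t
  have par_cases: "t = alpha (par t) \<or> t = beta (alpha (par t))" for t
    unfolding par_def using theI'[OF up[rule_format, of t]] by simp
  have par_a: "par (alpha g) = g" for g
    unfolding par_def by (rule the1_equality[OF up[rule_format]]) simp
  have par_ba: "par (beta (alpha g)) = g" for g
    unfolding par_def by (rule the1_equality[OF up[rule_format]]) simp
  have nba: "beta (alpha g) \<noteq> alpha g" for g
    using np[rule_format, of 1 "alpha g"] by simp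
  have lvl_par: "lvl (par t) = lvl t - 1" for t
    using par_cases[of t] l by (metis add_diff_cancel_right')
  have lvl_parn: "lvl ((par^^i) t) = lvl t - int i" for i t
    by (induction i) (simp_all add: lvl_par)
  have enc: "\<exists>y'. dyadic_encoding alpha beta x' y' \<and>
        (snd (y' e) = d \<or> (\<exists>i. snd (y' e) = x' ((par^^(Suc i)) e)))" for x' :: "'t \<Rightarrow> 'a" and e d
  proof -
    define P where "P t i \<longleftrightarrow> (par^^i) t = alpha (par ((par^^i) t))" for t i
    define s where "s t = (if \<exists>i. P t i then x' (par ((par^^(LEAST i. P t i)) t)) else d)" for t
    have s_a: "s (alpha g) = x' g" for g
    proof -
      have "P (alpha g) 0" by (simp add: P_def par_a)
      then have "(LEAST i. P (alpha g) i) = 0" by (simp add: Least_eq_0)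
      then show ?thesis using \<open>P (alpha g) 0\<close> unfolding s_def by (auto simp: par_a)
    qed
    have s_ba: "s (beta (alpha g)) = s g" for g
    proof -
      have P0: "\<not> P (beta (alpha g)) 0" by (simp add: P_def par_ba nba)
      have PS: "P (beta (alpha g)) (Suc i) = P g i" for i
        by (simp add: P_def funpow_Suc_right par_ba del: funpow.simps)
      have pS: "(par^^(Suc i)) (beta (alpha g)) = (par^^i) g" for i
        by (simp add: funpow_Suc_right par_ba del: funpow.simps)
      show ?thesis
      proof (cases "\<exists>i. P g i")
        case True
        then obtain i where "P g i" by blast
        then have "P (beta (alpha g)) (Suc i)" using PS by simp
        then have "(LEAST i. P (beta (alpha g)) i) = Suc (LEAST i. P (beta (alpha g)) (Suc i))"
          by (rule Least_Suc[of "P (beta (alpha g))", OF _ P0])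
        then have "(LEAST i. P (beta (alpha g)) i) = Suc (LEAST i. P g i)"
          using PS by simp
        then show ?thesis unfolding s_def using True PS pS by auto
      next
        case False
        then have "\<not> (\<exists>i. P (beta (alpha g)) i)" using PS P0 by (metis not0_implies_Suc)
        then show ?thesis unfolding s_def using False by auto
      qed
    qed
    define y' where "y' t = (x' t, s t)" for t
    have "dyadic_encoding alpha beta x' y'"
      unfolding dyadic_encoding_def y'_def using s_a s_ba by simp
    moreover have "snd (y' e) = d \<or> (\<exists>i. snd (y' e) = x' ((par^^(Suc i)) e))"
      unfolding y'_def s_def by auto
    ultimately show ?thesis by blast
  qed
  show ?thesis
  proof (intro allI iffI)
    fix g assume m: "\<forall>h\<in>Uset n. x (act alpha beta g h) = p h"
    define d where "d = snd (y g)"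
    define x' where "x' t = (if t \<in> act alpha beta eps ` Uset (Suc n)
       then x (act alpha beta g (inv_into (Uset (Suc n)) (act alpha beta eps) t)) else d)" for t
    have inj: "inj_on (act alpha beta eps) (Uset (Suc n))"
      using act_inj[OF l np] by (meson inj_on_subset subset_UNIV)
    have x'U: "x' (act alpha beta eps h) = x (act alpha beta g h)" if "h \<in> Uset (Suc n)" for h
      unfolding x'_def using that inj by simp
    obtain y' where e': "dyadic_encoding alpha beta x' y'"
      and sy: "snd (y' eps) = d \<or> (\<exists>i. snd (y' eps) = x' ((par^^(Suc i)) eps))"
      using enc by blast
    have nimg: "(par^^(Suc i)) eps \<notin> act alpha beta eps ` Uset (Suc n)" for i
    proof
      assume "(par^^(Suc i)) eps \<in> act alpha beta eps ` Uset (Suc n)"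
      then obtain k q where "(par^^(Suc i)) eps = act alpha beta eps (k,q)" by auto
      then have "lvl eps - int (Suc i) = lvl eps + int k"
        using lvl_parn lvl_act[OF l] by metis
      then show False by simp
    qed
    have sd: "snd (y' eps) = snd (y g)"
      using sy nimg unfolding x'_def d_def by auto
    have ag: "\<forall>q < 2^(Suc n). snd (y (act alpha beta g (Suc n,q))) = snd (y' (act alpha beta eps (Suc n,q)))"
      by (rule agree[OF c assms(2) e']) (use x'U sd in auto)
    have "restrict (\<lambda>h. snd (y (act alpha beta g h))) (Lset n)
        = restrict (\<lambda>h. snd (y' (act alpha beta eps h))) (Lset n)"
      using ag by (auto simp: restrict_def Lset_def)
    moreover have "\<forall>h\<in>Uset n. x' (act alpha beta eps h) = p h"
      using m x'U by (auto simp: Uset_def)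
    ultimately show "restrict (\<lambda>h. snd (y (act alpha beta g h))) (Lset n) \<in> ptilde alpha beta eps n p"
      unfolding ptilde_def using e' by blast
  next
    fix g assume "restrict (\<lambda>h. snd (y (act alpha beta g h))) (Lset n) \<in> ptilde alpha beta eps n p"
    then obtain x' y' where r: "restrict (\<lambda>h. snd (y (act alpha beta g h))) (Lset n)
        = restrict (\<lambda>h. snd (y' (act alpha beta eps h))) (Lset n)"
      and e': "dyadic_encoding alpha beta x' y'"
      and m': "\<forall>h\<in>Uset n. x' (act alpha beta eps h) = p h"
      unfolding ptilde_def by blast
    show "\<forall>h\<in>Uset n. x (act alpha beta g h) = p h"
    proof
      fix h assume hU: "h \<in> Uset n"
      obtain k r0 where hh: "h = (k,r0)" and k: "k < n" and r0: "r0 < 2^k"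
        using hU unfolding Uset_def by auto
      define q where "q = (2*r0+1)*2^(n-k) - 1"
      have "(2*r0+1)*2^(n-k) \<le> (2^(Suc k))*2^(n-k)"
        using r0 by (intro mult_right_mono) auto
      also have "\<dots> = 2^(Suc n)" using k by (simp add: power_add[symmetric])
      finally have le: "(2*r0+1)*2^(n-k) \<le> (2::nat)^(Suc n)" .
      have qlt: "q < 2^(Suc n)" unfolding q_def using le zero_less_power[of "2::nat" "Suc n"] by linarith
      have nn: "Suc (k + (n-k)) = Suc n" using k by simp
      have "snd (y (act alpha beta g (Suc n, q))) = x (act alpha beta g h)"
        using down[OF c assms(2), of g k "n-k" r0] nn hh q_def by simp
      moreover have "snd (y' (act alpha beta eps (Suc n, q))) = x' (act alpha beta eps h)"
        using down[OF c e', of eps k "n-k" r0] nn hh q_def by simp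
      moreover have "(Suc n, q) \<in> Lset n" using qlt by (simp add: Lset_def)
      ultimately show "x (act alpha beta g h) = p h"
        using r m' hU by (metis restrict_apply')
    qed
  qed
qed

end
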